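(* Let $p\geq 1$ and let $A$ be a non-empty set. Then for each $g\in\ell^p(A)$, the set $$\Gamma_g:=\big\{f\in\ell^p(A):\ |f|\geq|g|\big\}$$ is not $\sigma$-porous in $\ell^p(A)$.
   Context: $\ell^p(A)$ is $L^p$ of $A$ with counting measure. Porosity: Let $X$ be a metric space and $0<\lambda<1$. A set $E\subseteq X$ is $\lambda$-porous at $x\in E$ if for each $\delta>0$ there is $y\in B(x;\delta)\setminus\{x\}$ with $B(y;\lambda\, d(x,y))\cap E=\varnothing$; $E$ is $\lambda$-porous if it is $\lambda$-porous at each of its points; $E$ is $\sigma$-$\lambda$-porous if it is a countable union of $\lambda$-porous subsets of $X$. A set is called $\sigma$-porous if it is $\sigma$-$\lambda$-porous for some $\lambda\in(0,1)$; "not $\sigma$-porous" means not $\sigma$-$\lambda$-porous for any $\lambda\in(0,1)$. *)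

theory Defs
  imports "HOL-Analysis.Analysis"
begin

definition lp :: "real \<Rightarrow> 'a set \<Rightarrow> ('a \<Rightarrow> real) set" where
  "lp p A = {f. (\<forall>x. x \<notin> A \<longrightarrow> f x = 0) \<and> (\<lambda>x. \<bar>f x\<bar> powr p) summable_on A}"

definition lp_dist :: "real \<Rightarrow> 'a set \<Rightarrow> ('a \<Rightarrow> real) \<Rightarrow> ('a \<Rightarrow> real) \<Rightarrow> real" where
  "lp_dist p A f g = (infsum (\<lambda>x. \<bar>f x - g x\<bar> powr p) A) powr (1 / p)"

definition porous_at :: "'b set \<Rightarrow> ('b \<Rightarrow> 'b \<Rightarrow> real) \<Rightarrow> real \<Rightarrow> 'b set \<Rightarrow> 'b \<Rightarrow> bool" where
  "porous_at X d lam E x \<longleftrightarrow>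
     (\<forall>\<delta>>0. \<exists>y\<in>X. d x y < \<delta> \<and> y \<noteq> x \<and>
        {z\<in>X. d y z < lam * d x y} \<inter> E = {})"

definition porous :: "'b set \<Rightarrow> ('b \<Rightarrow> 'b \<Rightarrow> real) \<Rightarrow> real \<Rightarrow> 'b set \<Rightarrow> bool" where
  "porous X d lam E \<longleftrightarrow> E \<subseteq> X \<and> (\<forall>x\<in>E. porous_at X d lam E x)"

definition sigma_porous :: "'b set \<Rightarrow> ('b \<Rightarrow> 'b \<Rightarrow> real) \<Rightarrow> real \<Rightarrow> 'b set \<Rightarrow> bool" where
  "sigma_porous X d lam E \<longleftrightarrow>
     (\<exists>F :: nat \<Rightarrow> 'b set. (\<forall>n. porous X d lam (F n)) \<and> E = (\<Union>n. F n))"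

end

theory Submission
  imports Defs
begin

lemma pow_le_self:
  fixes s p :: real
  assumes "1 \<le> p" "0 \<le> s" "s \<le> 1"
  shows "s powr p \<le> s"
proof (cases "s = 0")
  case True then show ?thesis by simp
next
  case False
  then have "s powr p \<le> s powr 1" using assms by (intro powr_mono') auto
  then show ?thesis using False assms by simp
qed

lemma conv_pt:
  fixes a b t p :: real
  assumes p: "1 \<le> p" and ab: "0 \<le> a" "0 \<le> b" and t: "0 \<le> t" "t \<le> 1"
  shows "(t*a + (1-t)*b) powr p \<le> t * a powr p + (1-t) * b powr p"
proof (cases "a = 0")
  case True
  have "((1-t)*b) powr p = (1-t) powr p * b powr p" using t ab by (simp add: powr_mult)
  also have "\<dots> \<le> (1-t) * b powr p" using pow_le_self[OF p, of "1-t"] t by (intro mult_right_mono) auto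
  finally show ?thesis using True p by simp
next
  case a: False
  show ?thesis
  proof (cases "b = 0")
    case True
    have "(t*a) powr p = t powr p * a powr p" using t ab by (simp add: powr_mult)
    also have "\<dots> \<le> t * a powr p" using pow_le_self[OF p, of "t"] t by (intro mult_right_mono) auto
    finally show ?thesis using True p by simp
  next
    case False
    have "convex_on {0<..} (\<lambda>x. x powr p)" using powr_convex[OF p] .
    from convex_onD[OF this, of t b a] have "((1-t)*b + t*a) powr p \<le> (1-t) * b powr p + t * a powr p"
      using a False ab t by auto
    then show ?thesis by (simp add: algebra_simps)
  qed
qed

lemma conv_abs:
  fixes s u t p :: real
  assumes p: "1 \<le> p" and t: "0 \<le> t" "t \<le> 1"
  shows "abs (t * s + (1 - t) * u) powr p \<le> t * \<bar>s\<bar> powr p + (1-t) * \<bar>u\<bar> powr p"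
proof -
  have "abs (t * s + (1 - t) * u) \<le> t * \<bar>s\<bar> + (1 - t) * \<bar>u\<bar>"
  proof -
    have "abs (t * s + (1 - t) * u) \<le> abs (t * s) + abs ((1 - t) * u)" by (rule abs_triangle_ineq)
    also have "\<dots> = t * \<bar>s\<bar> + (1 - t) * \<bar>u\<bar>" using t by (simp add: abs_mult)
    finally show ?thesis .
  qed
  then have "abs (t * s + (1 - t) * u) powr p \<le> (t * \<bar>s\<bar> + (1 - t) * \<bar>u\<bar>) powr p"
    using p by (intro powr_mono2) auto
  also have "\<dots> \<le> t * \<bar>s\<bar> powr p + (1-t) * \<bar>u\<bar> powr p"
    using conv_pt[OF p _ _ t] by auto
  finally show ?thesis .
qed

lemma abs_add_powr_le:
  fixes u v p :: real
  assumes p: "1 \<le> p"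
  shows "\<bar>u + v\<bar> powr p \<le> 2 powr p * (\<bar>u\<bar> powr p + \<bar>v\<bar> powr p)"
proof -
  have "\<bar>u+v\<bar> \<le> 2 * max \<bar>u\<bar> \<bar>v\<bar>"
  proof -
    have "\<bar>u+v\<bar> \<le> \<bar>u\<bar> + \<bar>v\<bar>" by (rule abs_triangle_ineq)
    moreover have "\<bar>u\<bar> \<le> max \<bar>u\<bar> \<bar>v\<bar>" "\<bar>v\<bar> \<le> max \<bar>u\<bar> \<bar>v\<bar>" by simp_all
    ultimately show ?thesis by linarith
  qed
  then have "\<bar>u + v\<bar> powr p \<le> (2 * max \<bar>u\<bar> \<bar>v\<bar>) powr p" using p by (intro powr_mono2) auto
  also have "\<dots> = 2 powr p * (max \<bar>u\<bar> \<bar>v\<bar>) powr p" by (simp add: powr_mult)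
  also have "\<dots> \<le> 2 powr p * (\<bar>u\<bar> powr p + \<bar>v\<bar> powr p)"
  proof (intro mult_left_mono)
    show "max \<bar>u\<bar> \<bar>v\<bar> powr p \<le> \<bar>u\<bar> powr p + \<bar>v\<bar> powr p"
      by (cases "\<bar>u\<bar> \<le> \<bar>v\<bar>") (simp_all add: max_def)
  qed simp
  finally show ?thesis .
qed

locale LP =
  fixes p :: real and A :: "'a set"
  assumes p1: "1 \<le> p"
begin

abbreviation "X \<equiv> lp p A"
abbreviation "d \<equiv> lp_dist p A"
definition N :: "('a \<Rightarrow> real) \<Rightarrow> real" where
  "N f = infsum (\<lambda>x. \<bar>f x\<bar> powr p) A"

lemma p0: "0 < p" using p1 by simp

lemma X_iff: "f \<in> X \<longleftrightarrow> (\<forall>x. x \<notin> A \<longrightarrow> f x = 0) \<and> (\<lambda>x. \<bar>f x\<bar> powr p) summable_on A"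
  by (simp add: lp_def)

lemma X_summ: "f \<in> X \<Longrightarrow> (\<lambda>x. \<bar>f x\<bar> powr p) summable_on A"
  by (simp add: lp_def)

lemma X_out: "f \<in> X \<Longrightarrow> x \<notin> A \<Longrightarrow> f x = 0"
  by (simp add: lp_def)

lemma N_nonneg: "0 \<le> N f"
  unfolding N_def by (intro infsum_nonneg) auto

lemma d_eq: "d f h = N (\<lambda>x. f x - h x) powr (1/p)"
  by (simp add: lp_dist_def N_def)

lemma d_nonneg: "0 \<le> d f h" by (simp add: d_eq)

lemma d_sym: "d f h = d h f"
  by (simp add: lp_dist_def abs_minus_commute)

lemma X_add: assumes "f \<in> X" "h \<in> X" shows "(\<lambda>x. f x + h x) \<in> X"
proof -
  have s: "(\<lambda>x. 2 powr p * (\<bar>f x\<bar> powr p + \<bar>h x\<bar> powr p)) summable_on A"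
    using X_summ[OF assms(1)] X_summ[OF assms(2)]
    by (intro summable_on_cmult_right summable_on_add) auto
  have o: "\<forall>x. x \<notin> A \<longrightarrow> f x + h x = 0" using assms by (simp add: X_iff)
  show ?thesis unfolding X_iff
  proof (intro conjI)
    show "(\<lambda>x. \<bar>f x + h x\<bar> powr p) summable_on A"
      by (rule summable_on_comparison_test[OF s]) (auto intro: abs_add_powr_le p1)
  qed (use o in auto)
qed

lemma X_scale: assumes "f \<in> X" shows "(\<lambda>x. c * f x) \<in> X"
proof -
  have "(\<lambda>x. \<bar>c\<bar> powr p * \<bar>f x\<bar> powr p) summable_on A"
    using X_summ[OF assms] by (intro summable_on_cmult_right)
  moreover have "(\<lambda>x. \<bar>c * f x\<bar> powr p) = (\<lambda>x. \<bar>c\<bar> powr p * \<bar>f x\<bar> powr p)"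
    by (simp add: abs_mult powr_mult)
  moreover have "\<forall>x. x \<notin> A \<longrightarrow> c * f x = 0" using assms by (simp add: X_iff)
  ultimately show ?thesis unfolding X_iff by simp
qed

lemma X_diff: assumes "f \<in> X" "h \<in> X" shows "(\<lambda>x. f x - h x) \<in> X"
  using X_add[OF assms(1) X_scale[OF assms(2), of "-1"]] by simp

lemma X_zero: "(\<lambda>x. 0) \<in> X"
  unfolding X_iff using p0 by simp

lemma N_scale: assumes "f \<in> X" shows "N (\<lambda>x. c * f x) = \<bar>c\<bar> powr p * N f"
proof -
  have "(\<lambda>x. \<bar>c * f x\<bar> powr p) = (\<lambda>x. \<bar>c\<bar> powr p * \<bar>f x\<bar> powr p)"
    by (simp add: abs_mult powr_mult)
  then show ?thesis unfolding N_def by (simp add: infsum_cmult_right')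
qed

lemma N_point: assumes "f \<in> X" "k \<in> A" shows "\<bar>f k\<bar> powr p \<le> N f"
proof -
  have "sum (\<lambda>x. \<bar>f x\<bar> powr p) {k} \<le> N f"
    unfolding N_def using assms by (intro finite_sum_le_infsum X_summ) auto
  then show ?thesis by simp
qed

lemma N_root_point: assumes "f \<in> X" shows "\<bar>f k\<bar> \<le> N f powr (1/p)"
proof (cases "k \<in> A")
  case True
  have "\<bar>f k\<bar> = (\<bar>f k\<bar> powr p) powr (1/p)" using p0 by (simp add: powr_powr)
  also have "\<dots> \<le> N f powr (1/p)" using N_point[OF assms True] p0 by (intro powr_mono2) auto
  finally show ?thesis .
next
  case False then show ?thesis using X_out[OF assms False] by simp
qed

lemma d_point: assumes "f \<in> X" "h \<in> X" shows "\<bar>f k - h k\<bar> \<le> d f h"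
  using N_root_point[OF X_diff[OF assms]] by (simp add: d_eq)

lemma d_zero_eq: assumes "f \<in> X" "h \<in> X" "d f h = 0" shows "f = h"
proof
  fix k show "f k = h k" using d_point[OF assms(1,2), of k] assms(3) by simp
qed

lemma d_self: "d f f = 0"
  by (simp add: lp_dist_def p0)


lemma N_zero_imp: assumes "f \<in> X" "N f = 0" "k \<in> A" shows "f k = 0"
proof -
  have "\<bar>f k\<bar> powr p = 0"
    using nonneg_infsum_le_0D[of "\<lambda>x. \<bar>f x\<bar> powr p" A k] assms X_summ[OF assms(1)]
    unfolding N_def by auto
  then show ?thesis by simp
qed

lemma N_cong: assumes "\<And>k. k \<in> A \<Longrightarrow> f k = h k" shows "N f = N h"
  unfolding N_def by (rule infsum_cong) (simp add: assms)

lemma N_root_pow: "(N f powr (1/p)) powr p = N f"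
  using p0 N_nonneg[of f] by (simp add: powr_powr)

lemma mink:
  assumes u: "u \<in> X" and v: "v \<in> X"
  shows "N (\<lambda>x. u x + v x) powr (1/p) \<le> N u powr (1/p) + N v powr (1/p)"
proof -
  define a where "a = N u powr (1/p)"
  define b where "b = N v powr (1/p)"
  have a0: "0 \<le> a" and b0: "0 \<le> b" by (simp_all add: a_def b_def)
  have Na: "N u = a powr p" and Nb: "N v = b powr p" by (simp_all add: a_def b_def N_root_pow)
  show ?thesis
  proof (cases "a = 0")
    case True
    then have "N u = 0" using Na p0 by simp
    then have "N (\<lambda>x. u x + v x) = N v" using N_zero_imp[OF u] by (intro N_cong) auto
    then show ?thesis using True by (simp add: a_def)
  next
    case a: False
    show ?thesis
    proof (cases "b = 0")
      case True
      then have "N v = 0" using Nb p0 by simp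
      then have "N (\<lambda>x. u x + v x) = N u" using N_zero_imp[OF v] by (intro N_cong) auto
      then show ?thesis using True by (simp add: b_def)
    next
      case b: False
      have ap: "0 < a" "0 < b" using a b a0 b0 by auto
      define t where "t = a / (a+b)"
      have t: "0 \<le> t" "t \<le> 1" using ap by (auto simp: t_def)
      have t1: "1 - t = b / (a+b)" using ap by (simp add: t_def field_simps)
      define c1 where "c1 = (a+b) powr p * t / a powr p"
      define c2 where "c2 = (a+b) powr p * (1-t) / b powr p"
      have pt: "\<bar>u x + v x\<bar> powr p \<le> c1 * \<bar>u x\<bar> powr p + c2 * \<bar>v x\<bar> powr p" for x
      proof -
        have e1: "t * (u x / a) = u x / (a+b)" using ap by (simp add: t_def)
        have e2: "(1 - t) * (v x / b) = v x / (a+b)" using ap by (simp add: t1)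
        have "u x + v x = (a+b) * (t * (u x / a) + (1 - t) * (v x / b))"
          unfolding e1 e2 using ap by (simp add: add_divide_distrib[symmetric])
        then have "\<bar>u x + v x\<bar> powr p = (a+b) powr p * \<bar>t * (u x / a) + (1 - t) * (v x / b)\<bar> powr p"
          using ap by (simp add: abs_mult powr_mult)
        also have "\<dots> \<le> (a+b) powr p * (t * \<bar>u x / a\<bar> powr p + (1 - t) * \<bar>v x / b\<bar> powr p)"
          using conv_abs[OF p1 t, of "u x / a" "v x / b"] ap by (intro mult_left_mono) auto
        also have "\<dots> = c1 * \<bar>u x\<bar> powr p + c2 * \<bar>v x\<bar> powr p"
          using ap by (simp add: c1_def c2_def powr_divide field_simps)
        finally show ?thesis .
      qed
      have su: "(\<lambda>x. c1 * \<bar>u x\<bar> powr p) summable_on A" using X_summ[OF u] by (rule summable_on_cmult_right)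
      have sv: "(\<lambda>x. c2 * \<bar>v x\<bar> powr p) summable_on A" using X_summ[OF v] by (rule summable_on_cmult_right)
      have "N (\<lambda>x. u x + v x) \<le> infsum (\<lambda>x. c1 * \<bar>u x\<bar> powr p + c2 * \<bar>v x\<bar> powr p) A"
        unfolding N_def using X_summ[OF X_add[OF u v]] summable_on_add[OF su sv] pt
        by (intro infsum_mono) auto
      also have "\<dots> = c1 * N u + c2 * N v"
        using su sv by (simp add: infsum_add infsum_cmult_right' N_def)
      also have "\<dots> = (a+b) powr p"
      proof -
        have "c1 * N u = (a+b) powr p * t" using ap by (simp add: c1_def Na)
        moreover have "c2 * N v = (a+b) powr p * (1 - t)" using ap by (simp add: c2_def Nb)
        ultimately show ?thesis by (simp add: algebra_simps)
      qed
      finally have "N (\<lambda>x. u x + v x) \<le> (a+b) powr p" .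
      then have "N (\<lambda>x. u x + v x) powr (1/p) \<le> ((a+b) powr p) powr (1/p)"
        using p0 N_nonneg by (intro powr_mono2) auto
      also have "\<dots> = a + b" using ap p0 by (simp add: powr_powr)
      finally show ?thesis by (simp add: a_def b_def)
    qed
  qed
qed

lemma d_tri: assumes "f \<in> X" "w \<in> X" "h \<in> X" shows "d f h \<le> d f w + d w h"
proof -
  have "d f h = N (\<lambda>x. (f x - w x) + (w x - h x)) powr (1/p)" by (simp add: d_eq)
  also have "\<dots> \<le> d f w + d w h"
    using mink[OF X_diff[OF assms(1,2)] X_diff[OF assms(2,3)]] by (simp add: d_eq)
  finally show ?thesis .
qed


lemma tail:
  assumes hs: "h summable_on A" and hn: "\<And>k. 0 \<le> h k" and e: "0 < (e::real)"
  shows "\<exists>K. finite K \<and> K \<subseteq> A \<and> (\<forall>F. finite F \<and> F \<subseteq> A - K \<longrightarrow> sum h F \<le> e)"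
proof -
  have "((\<lambda>F. sum h F) \<longlongrightarrow> infsum h A) (finite_subsets_at_top A)"
    using infsum_tendsto[OF hs] .
  then have "eventually (\<lambda>F. dist (sum h F) (infsum h A) < e/2) (finite_subsets_at_top A)"
    by (rule tendsto_iff[THEN iffD1, rule_format]) (use e in simp)
  then have "\<exists>K. finite K \<and> K \<subseteq> A \<and> (\<forall>Y. finite Y \<and> K \<subseteq> Y \<and> Y \<subseteq> A \<longrightarrow> dist (sum h Y) (infsum h A) < e/2)"
    by (simp only: eventually_finite_subsets_at_top)
  then obtain K where K: "finite K" "K \<subseteq> A"
    and KY0: "\<forall>Y. finite Y \<and> K \<subseteq> Y \<and> Y \<subseteq> A \<longrightarrow> dist (sum h Y) (infsum h A) < e/2"
    by blast
  have KY: "dist (sum h Y) (infsum h A) < e/2" if "finite Y" "K \<subseteq> Y" "Y \<subseteq> A" for Y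
    using KY0 that by blast
  have "sum h F \<le> e" if F: "finite F" "F \<subseteq> A - K" for F
  proof -
    have d1: "dist (sum h (K \<union> F)) (infsum h A) < e/2" using F K by (intro KY) auto
    have d2: "dist (sum h K) (infsum h A) < e/2" using K by (intro KY) auto
    have "sum h (K \<union> F) = sum h K + sum h F" using F K by (intro sum.union_disjoint) auto
    moreover have "\<bar>sum h (K \<union> F) - infsum h A\<bar> < e/2" using d1 by (simp add: dist_real_def)
    moreover have "\<bar>sum h K - infsum h A\<bar> < e/2" using d2 by (simp add: dist_real_def)
    ultimately show ?thesis by (simp only: abs_less_iff) linarith
  qed
  then show ?thesis using K by blast
qed


end

locale LPL = LP +
  fixes lam :: real
  assumes lam0: "0 < lam" and lam1: "lam < 1"
begin

definition good :: "('a \<Rightarrow> real) \<Rightarrow> real \<Rightarrow> ('a \<Rightarrow> real) \<Rightarrow> bool" where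
  "good c r \<phi> \<longleftrightarrow> c \<in> X \<and> 0 < r \<and> (\<forall>k. 0 \<le> \<phi> k) \<and> (\<forall>k. k \<notin> A \<longrightarrow> \<phi> k = 0)
     \<and> (\<lambda>k. \<phi> k powr p) summable_on A \<and> (\<forall>k\<in>A. \<phi> k \<le> \<bar>c k\<bar>)"

definition H :: "('a \<Rightarrow> real) \<Rightarrow> real \<Rightarrow> ('a \<Rightarrow> real) \<Rightarrow> ('a \<Rightarrow> real) set" where
  "H c r \<phi> = {f \<in> X. d c f \<le> r \<and> (\<forall>k\<in>A. \<phi> k \<le> \<bar>f k\<bar>)}"

definition thick :: "('a \<Rightarrow> real) \<Rightarrow> real \<Rightarrow> ('a \<Rightarrow> real) \<Rightarrow> ('a \<Rightarrow> real) \<Rightarrow> bool" where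
  "thick c r \<phi> f \<longleftrightarrow> (\<exists>\<delta>>0. \<forall>y\<in>X. 0 < d f y \<and> d f y < \<delta> \<longrightarrow>
      (\<exists>z\<in>H c r \<phi>. d c z < r \<and> d y z < lam * d f y))"

lemma refine:
  assumes g: "good c r \<phi>" and f0H: "f0 \<in> H c r \<phi>" and f0r: "d c f0 < r" and rho: "0 < \<rho>"
  shows "\<exists>c' r' \<phi>'. good c' r' \<phi>' \<and> r' \<le> \<rho> \<and>
           (\<forall>f\<in>H c' r' \<phi>'. f \<in> H c r \<phi> \<and> d f0 f < \<rho> \<and> thick c r \<phi> f)"
proof -
  have cX: "c \<in> X" and r0: "0 < r" and phi0: "\<And>k. 0 \<le> \<phi> k" and phiA: "\<And>k. k \<notin> A \<Longrightarrow> \<phi> k = 0"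
    and phis: "(\<lambda>k. \<phi> k powr p) summable_on A" and phic: "\<And>k. k \<in> A \<Longrightarrow> \<phi> k \<le> \<bar>c k\<bar>"
    using g by (auto simp: good_def)
  have f0X: "f0 \<in> X" and f0phi: "\<And>k. k \<in> A \<Longrightarrow> \<phi> k \<le> \<bar>f0 k\<bar>" using f0H by (auto simp: H_def)
  define s where "s = min \<rho> (r - d c f0)"
  have s0: "0 < s" and sr: "s \<le> \<rho>" and sd: "s \<le> r - d c f0" using rho f0r by (auto simp: s_def)
  define L where "L = 1 / lam"
  have L0: "0 < L" using lam0 by (simp add: L_def)
  have Lq: "1 / (L+1) < lam"
    using lam0 lam1 by (simp add: L_def field_simps)
  define \<eta> where "\<eta> = (s/16) powr p / (L powr p)"
  have eta0: "0 < \<eta>" using s0 L0 by (simp add: \<eta>_def)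
  obtain K where K: "finite K" "K \<subseteq> A" and Ktail: "\<And>F. finite F \<Longrightarrow> F \<subseteq> A - K \<Longrightarrow> sum (\<lambda>k. \<phi> k powr p) F \<le> \<eta>"
    using tail[OF phis _ eta0] by auto
  define \<epsilon> where "\<epsilon> = (s/16) / (2 * (real (card K) + 1))"
  have eps0: "0 < \<epsilon>" using s0 by (simp add: \<epsilon>_def)
  have eps_s: "\<epsilon> \<le> s/16" using s0 by (simp add: \<epsilon>_def field_simps)
  have cardK: "real (card K) * (2*\<epsilon>) powr p \<le> (s/16) powr p"
  proof -
    have e2: "2*\<epsilon> = (s/16) / (real (card K) + 1)" by (simp add: \<epsilon>_def field_simps)
    have ge: "real (card K) + 1 \<le> (real (card K) + 1) powr p"
    proof -
      have "(real (card K) + 1) powr 1 \<le> (real (card K) + 1) powr p" using p1 by (intro powr_mono) auto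
      then show ?thesis by simp
    qed
    have "real (card K) * (2*\<epsilon>) powr p = real (card K) * (s/16) powr p / (real (card K) + 1) powr p"
    proof -
      have "(2*\<epsilon>) powr p = (s/16) powr p / (real (card K) + 1) powr p"
        unfolding e2 using s0 by (intro powr_divide)
      then show ?thesis by simp
    qed
    also have "\<dots> \<le> real (card K) * (s/16) powr p / (real (card K) + 1)"
      using ge by (intro divide_left_mono) auto
    also have "\<dots> \<le> (s/16) powr p"
    proof -
      have "real (card K) \<le> real (card K) + 1" by simp
      then have "real (card K) * (s/16) powr p \<le> (real (card K) + 1) * (s/16) powr p"
        by (intro mult_right_mono) auto
      then show ?thesis by (simp add: field_simps)
    qed
    finally show ?thesis .
  qed
  define \<sigma> where "\<sigma> k = (if f0 k \<ge> 0 then 1 else -1::real)" for k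
  define m where "m k = (if k \<in> K then 2*\<epsilon> else L * \<phi> k)" for k
  define w0 where "w0 k = (if k \<in> A then \<sigma> k * m k else 0)" for k
  define c' where "c' k = f0 k + w0 k" for k
  define \<phi>' where "\<phi>' k = (if k \<in> K then \<phi> k else (L+1) * \<phi> k)" for k
  define r' where "r' = min \<epsilon> (s/4)"
  have m0: "0 \<le> m k" for k using eps0 L0 phi0[of k] by (simp add: m_def)
  have abs_w0: "\<bar>w0 k\<bar> = (if k \<in> A then m k else 0)" for k
    using m0[of k] by (simp add: w0_def \<sigma>_def abs_mult)
  have abs_c': "\<bar>c' k\<bar> = \<bar>f0 k\<bar> + m k" if "k \<in> A" for k
    using that m0[of k] by (auto simp: c'_def w0_def \<sigma>_def)
  define B where "B k = (if k \<in> K then (2*\<epsilon>) powr p else L powr p * \<phi> k powr p)" for k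
  have w0pt: "\<bar>w0 k\<bar> powr p \<le> B k" for k
  proof (cases "k \<in> A")
    case True
    then have "\<bar>w0 k\<bar> powr p = m k powr p" using abs_w0[of k] by simp
    also have "\<dots> = B k" using L0 phi0[of k] by (simp add: m_def B_def powr_mult)
    finally show ?thesis by simp
  next
    case False then show ?thesis using abs_w0[of k] K L0 phi0[of k] eps0 by (auto simp: B_def)
  qed
  have B0: "0 \<le> B k" for k by (simp add: B_def)
  have sK: "(\<lambda>k. if k \<in> K then (2*\<epsilon>) powr p else 0) summable_on A"
  proof -
    have "(\<lambda>k. if k \<in> K then (2*\<epsilon>) powr p else 0) summable_on K" using K by simp
    then show ?thesis using K by (subst summable_on_cong_neutral[where T=K]) auto
  qed
  have sB': "(\<lambda>k. (if k \<in> K then (2*\<epsilon>) powr p else 0) + L powr p * \<phi> k powr p) summable_on A"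
    using sK summable_on_cmult_right[OF phis] by (rule summable_on_add)
  have sB: "B summable_on A"
    by (rule summable_on_comparison_test[OF sB']) (auto simp: B_def)
  have w0X: "w0 \<in> X" unfolding X_iff
  proof (intro conjI allI impI)
    show "(\<lambda>x. \<bar>w0 x\<bar> powr p) summable_on A"
      by (rule summable_on_comparison_test[OF sB]) (use w0pt in auto)
  qed (simp add: w0_def)
  have c'X: "c' \<in> X"
  proof -
    have "(\<lambda>x. f0 x + w0 x) \<in> X" using X_add[OF f0X w0X] .
    then show ?thesis by (simp add: c'_def[abs_def])
  qed
  have Nw0: "N w0 \<le> 2 * (s/16) powr p"
    unfolding N_def
  proof (rule infsum_le_finite_sums)
    show "(\<lambda>x. \<bar>w0 x\<bar> powr p) summable_on A" using w0X by (rule X_summ)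
    fix F assume F: "finite F" "F \<subseteq> A"
    have "sum (\<lambda>x. \<bar>w0 x\<bar> powr p) F \<le> sum B F"
      using w0pt by (intro sum_mono) auto
    also have "sum B F = real (card (F \<inter> K)) * (2*\<epsilon>) powr p + L powr p * sum (\<lambda>k. \<phi> k powr p) (F - K)"
      using F by (simp add: B_def sum.If_cases sum_distrib_left Diff_eq)
    also have "\<dots> \<le> real (card K) * (2*\<epsilon>) powr p + L powr p * \<eta>"
    proof (intro add_mono mult_right_mono mult_left_mono)
      show "real (card (F \<inter> K)) \<le> real (card K)" using K by (auto intro: card_mono)
      show "sum (\<lambda>k. \<phi> k powr p) (F - K) \<le> \<eta>" using F by (intro Ktail) auto
    qed auto
    also have "\<dots> \<le> 2 * (s/16) powr p"
      using cardK L0 by (simp add: \<eta>_def)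
    finally show "sum (\<lambda>x. \<bar>w0 x\<bar> powr p) F \<le> 2 * (s/16) powr p" .
  qed
  have df0c': "d f0 c' \<le> s/8"
  proof -
    have "d f0 c' = N w0 powr (1/p)"
      unfolding d_eq by (rule arg_cong[where f="\<lambda>t. t powr (1/p)"], unfold N_def, rule infsum_cong) (simp add: c'_def)
    also have "\<dots> \<le> (2 * (s/16) powr p) powr (1/p)" using Nw0 N_nonneg p0 by (intro powr_mono2) auto
    also have "\<dots> = 2 powr (1/p) * (s/16)" using s0 p0 by (simp add: powr_mult powr_powr)
    also have "\<dots> \<le> 2 * (s/16)"
    proof -
      have "2 powr (1/p) \<le> 2 powr 1" using p1 by (intro powr_mono) auto
      then show ?thesis using s0 by (intro mult_right_mono) auto
    qed
    finally show ?thesis by simp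
  qed
  have goodc': "good c' r' \<phi>'"
    unfolding good_def
  proof (intro conjI allI impI ballI)
    show "c' \<in> X" by fact
    show "0 < r'" using eps0 s0 by (simp add: r'_def)
    fix k
    show "0 \<le> \<phi>' k" using phi0[of k] L0 by (simp add: \<phi>'_def)
    show "k \<notin> A \<Longrightarrow> \<phi>' k = 0" using phiA[of k] by (simp add: \<phi>'_def)
    show "k \<in> A \<Longrightarrow> \<phi>' k \<le> \<bar>c' k\<bar>"
      using abs_c'[of k] f0phi[of k] eps0 by (auto simp: \<phi>'_def m_def algebra_simps)
  next
    have "(\<lambda>k. (L+1) powr p * \<phi> k powr p) summable_on A" using phis by (rule summable_on_cmult_right)
    then show "(\<lambda>k. \<phi>' k powr p) summable_on A"
    proof (rule summable_on_comparison_test)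
      fix k
      have ge1: "1 \<le> (L+1) powr p" using L0 p0 by (simp add: ge_one_powr_ge_zero)
      show "\<phi>' k powr p \<le> (L+1) powr p * \<phi> k powr p"
      proof (cases "k \<in> K")
        case True
        have "1 * \<phi> k powr p \<le> (L+1) powr p * \<phi> k powr p" using ge1 by (intro mult_right_mono) auto
        then show ?thesis using True by (simp add: \<phi>'_def)
      next
        case False then show ?thesis using phi0[of k] L0 by (simp add: \<phi>'_def powr_mult)
      qed
    qed auto
  qed
  have main: "f \<in> H c r \<phi> \<and> d f0 f < \<rho> \<and> thick c r \<phi> f" if fH: "f \<in> H c' r' \<phi>'" for f
  proof -
    have fX: "f \<in> X" and dcf: "d c' f \<le> r'" and fphi: "\<And>k. k \<in> A \<Longrightarrow> \<phi>' k \<le> \<bar>f k\<bar>"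
      using fH by (auto simp: H_def)
    have phi'ge: "\<phi> k \<le> \<phi>' k" for k using phi0[of k] L0 by (simp add: \<phi>'_def algebra_simps)
    have df0f: "d f0 f \<le> 3 * s / 8"
      using d_tri[OF f0X c'X fX] df0c' dcf by (simp add: r'_def)
    have dcf': "d c f \<le> r - 5 * s / 8"
      using d_tri[OF cX f0X fX] df0f sd by simp
    have fHc: "f \<in> H c r \<phi>"
      using fX dcf' s0 fphi phi'ge by (auto simp: H_def intro: order_trans)
    have "thick c r \<phi> f"
      unfolding thick_def
    proof (intro exI[of _ "min \<epsilon> (s/8)"] conjI ballI impI)
      show "0 < min \<epsilon> (s/8)" using eps0 s0 by simp
      fix y assume yX: "y \<in> X" and ty: "0 < d f y \<and> d f y < min \<epsilon> (s/8)"
      define t where "t = d f y"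
      have t0: "0 < t" and tm: "t < min \<epsilon> (s/8)" using ty unfolding t_def by blast+
      have te: "t < \<epsilon>" and ts: "t < s/8" using tm by simp_all
      define z where "z k = (if k \<in> A \<and> \<bar>y k\<bar> < \<phi> k then (if y k \<ge> 0 then \<phi> k else - \<phi> k) else y k)" for k
      have zpt: "\<bar>z k - y k\<bar> \<le> \<bar>f k - y k\<bar> / (L+1)" for k
      proof (cases "k \<in> A \<and> \<bar>y k\<bar> < \<phi> k")
        case False
        then have "z k = y k" unfolding z_def by auto
        then show ?thesis using L0 by simp
      next
        case True
        then have kA: "k \<in> A" and yk: "\<bar>y k\<bar> < \<phi> k" by auto
        have zy: "\<bar>z k - y k\<bar> = \<phi> k - \<bar>y k\<bar>" using True by (auto simp: z_def)
        show ?thesis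
        proof (cases "k \<in> K")
          case True
          have "\<bar>c' k\<bar> = \<bar>f0 k\<bar> + 2*\<epsilon>" using abs_c'[OF kA] True by (simp add: m_def)
          moreover have "\<bar>c' k - f k\<bar> \<le> \<epsilon>" using d_point[OF c'X fX, of k] dcf by (simp add: r'_def)
          moreover have "\<bar>f k - y k\<bar> \<le> t" using d_point[OF fX yX, of k] by (simp add: t_def)
          moreover have "\<phi> k \<le> \<bar>f0 k\<bar>" using f0phi[OF kA] .
          ultimately have False using yk te by linarith
          then show ?thesis ..
        next
          case False
          have h1: "(L+1) * \<phi> k \<le> \<bar>f k\<bar>" using fphi[OF kA] False by (simp add: \<phi>'_def)
          have h2: "\<bar>f k\<bar> - \<bar>y k\<bar> \<le> \<bar>f k - y k\<bar>" by (rule abs_triangle_ineq2)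
          have "(L+1) * (\<phi> k - \<bar>y k\<bar>) \<le> \<bar>f k - y k\<bar>"
          proof -
            have e: "(L+1) * (\<phi> k - \<bar>y k\<bar>) = (L+1) * \<phi> k - \<bar>y k\<bar> - L * \<bar>y k\<bar>"
              by (simp add: algebra_simps)
            have "0 \<le> L * \<bar>y k\<bar>" using L0 by simp
            then show ?thesis using e h1 h2 by linarith
          qed
          then have "(L+1) * \<bar>z k - y k\<bar> \<le> \<bar>f k - y k\<bar>" using zy by simp
          then show ?thesis using L0 by (simp add: pos_le_divide_eq mult.commute)
        qed
      qed
      have zyX: "(\<lambda>k. z k - y k) \<in> X" unfolding X_iff
      proof (intro conjI allI impI)
        fix k assume "k \<notin> A" then show "z k - y k = 0" by (simp add: z_def)
      next
        have "(\<lambda>k. (1/(L+1)) powr p * \<bar>f k - y k\<bar> powr p) summable_on A"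
          using X_summ[OF X_diff[OF fX yX]] by (rule summable_on_cmult_right)
        then show "(\<lambda>k. \<bar>z k - y k\<bar> powr p) summable_on A"
        proof (rule summable_on_comparison_test)
          fix k
          have "\<bar>z k - y k\<bar> powr p \<le> (\<bar>f k - y k\<bar> / (L+1)) powr p" using zpt[of k] p0 by (intro powr_mono2) auto
          also have "\<dots> = (1/(L+1)) powr p * \<bar>f k - y k\<bar> powr p" using L0 by (simp add: powr_divide)
          finally show "\<bar>z k - y k\<bar> powr p \<le> (1/(L+1)) powr p * \<bar>f k - y k\<bar> powr p" .
        qed auto
      qed
      have zX: "z \<in> X"
      proof -
        have "(\<lambda>k. y k + (z k - y k)) \<in> X" using X_add[OF yX zyX] .
        then show ?thesis by simp
      qed
      have dyz: "d y z \<le> t / (L+1)"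
      proof -
        have "N (\<lambda>k. y k - z k) \<le> infsum (\<lambda>k. (1/(L+1)) powr p * \<bar>f k - y k\<bar> powr p) A"
          unfolding N_def
        proof (rule infsum_mono)
          show "(\<lambda>k. \<bar>y k - z k\<bar> powr p) summable_on A" using X_summ[OF X_diff[OF yX zX]] .
          show "(\<lambda>k. (1/(L+1)) powr p * \<bar>f k - y k\<bar> powr p) summable_on A"
            using X_summ[OF X_diff[OF fX yX]] by (rule summable_on_cmult_right)
          fix k
          have "\<bar>y k - z k\<bar> powr p \<le> (\<bar>f k - y k\<bar> / (L+1)) powr p"
            using zpt[of k] p0 by (intro powr_mono2) (auto simp: abs_minus_commute)
          also have "\<dots> = (1/(L+1)) powr p * \<bar>f k - y k\<bar> powr p" using L0 by (simp add: powr_divide)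
          finally show "\<bar>y k - z k\<bar> powr p \<le> (1/(L+1)) powr p * \<bar>f k - y k\<bar> powr p" .
        qed
        also have "\<dots> = (1/(L+1)) powr p * N (\<lambda>k. f k - y k)"
          by (simp add: N_def infsum_cmult_right')
        finally have "d y z \<le> ((1/(L+1)) powr p * N (\<lambda>k. f k - y k)) powr (1/p)"
          unfolding d_eq using N_nonneg p0 by (intro powr_mono2) auto
        also have "\<dots> = ((1/(L+1)) powr p) powr (1/p) * N (\<lambda>k. f k - y k) powr (1/p)"
          using L0 N_nonneg by (intro powr_mult)
        also have "((1/(L+1)) powr p) powr (1/p) = 1/(L+1)"
          using L0 p0 by (simp add: powr_powr)
        also have "N (\<lambda>k. f k - y k) powr (1/p) = t" by (simp add: t_def d_eq)
        finally show ?thesis by simp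
      qed
      have dyz': "d y z < lam * d f y"
      proof -
        have "t * (1 / (L+1)) < t * lam" using Lq t0 by (intro mult_strict_left_mono) auto
        then have "t / (L+1) < lam * t" by (simp add: mult.commute)
        then show ?thesis using dyz by (simp add: t_def)
      qed
      have zphi: "\<forall>k\<in>A. \<phi> k \<le> \<bar>z k\<bar>" using phi0 by (auto simp: z_def)
      have dcz: "d c z < r"
      proof -
        have a1: "d c z \<le> d c f + d f z" using d_tri[OF cX fX zX] .
        have a2: "d f z \<le> d f y + d y z" using d_tri[OF fX yX zX] .
        have a3: "t / (L+1) \<le> t" using L0 t0 by (simp add: field_simps)
        have a4: "d f y = t" by (simp add: t_def)
        show ?thesis using a1 a2 a3 a4 dcf' dyz ts s0 by linarith
      qed
      show "\<exists>z\<in>H c r \<phi>. d c z < r \<and> d y z < lam * d f y"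
        using zX zphi dcz dyz' by (intro bexI[of _ z]) (auto simp: H_def)
    qed
    then show ?thesis using fHc df0f s0 sr by auto
  qed
  show ?thesis
    using goodc' main eps0 s0 sr by (intro exI[of _ c'] exI[of _ r'] exI[of _ \<phi>']) (auto simp: r'_def)
qed


lemma H_center: assumes "good c r \<phi>" shows "c \<in> H c r \<phi>"
  using assms d_self by (auto simp: good_def H_def)

lemma step:
  assumes g: "good c r \<phi>" and E: "porous X d lam E"
  shows "\<exists>c' r' \<phi>'. good c' r' \<phi>' \<and> r' \<le> r/2 \<and> H c' r' \<phi>' \<subseteq> H c r \<phi> \<and> H c' r' \<phi>' \<inter> E = {}"
proof -
  have r0: "0 < r" and cX: "c \<in> X" using g by (auto simp: good_def)
  have cH: "c \<in> H c r \<phi>" using H_center[OF g] .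
  obtain c1 r1 \<phi>1 where g1: "good c1 r1 \<phi>1" and r1: "r1 \<le> r/2"
    and R1: "\<And>f. f \<in> H c1 r1 \<phi>1 \<Longrightarrow> f \<in> H c r \<phi> \<and> d c f < r/2 \<and> thick c r \<phi> f"
    using refine[OF g cH _, of "r/2"] r0 d_self by auto
  show ?thesis
  proof (cases "H c1 r1 \<phi>1 \<inter> E = {}")
    case True
    then show ?thesis using g1 r1 R1 by blast
  next
    case False
    then obtain x where xH1: "x \<in> H c1 r1 \<phi>1" and xE: "x \<in> E" by blast
    have xX: "x \<in> X" using xH1 by (simp add: H_def)
    have "thick c r \<phi> x" using R1[OF xH1] by simp
    then obtain \<delta> where d0: "0 < \<delta>" and TH: "\<And>y. y \<in> X \<Longrightarrow> 0 < d x y \<Longrightarrow> d x y < \<delta> \<Longrightarrow>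
        \<exists>z\<in>H c r \<phi>. d c z < r \<and> d y z < lam * d x y"
      unfolding thick_def by blast
    have "porous_at X d lam E x" using E xE by (simp add: porous_def)
    then obtain y where yX: "y \<in> X" and dxy: "d x y < \<delta>" and yx: "y \<noteq> x"
      and hole: "{z \<in> X. d y z < lam * d x y} \<inter> E = {}"
      using d0 unfolding porous_at_def by blast
    have dpos: "0 < d x y"
    proof -
      have "d x y \<noteq> 0" using d_zero_eq[OF xX yX] yx by metis
      then show ?thesis using d_nonneg[of x y] by linarith
    qed
    obtain z where zH: "z \<in> H c r \<phi>" and dcz: "d c z < r" and dyz: "d y z < lam * d x y"
      using TH[OF yX dpos dxy] by blast
    have zX: "z \<in> X" using zH by (simp add: H_def)
    define \<rho> where "\<rho> = min (lam * d x y - d y z) (r/2)"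
    have rho0: "0 < \<rho>" using dyz r0 by (simp add: \<rho>_def)
    obtain c2 r2 \<phi>2 where g2: "good c2 r2 \<phi>2" and r2: "r2 \<le> \<rho>"
      and R2: "\<And>f. f \<in> H c2 r2 \<phi>2 \<Longrightarrow> f \<in> H c r \<phi> \<and> d z f < \<rho> \<and> thick c r \<phi> f"
      using refine[OF g zH dcz rho0] by auto
    have disj: "H c2 r2 \<phi>2 \<inter> E = {}"
    proof (rule ccontr)
      assume "H c2 r2 \<phi>2 \<inter> E \<noteq> {}"
      then obtain f where fH: "f \<in> H c2 r2 \<phi>2" and fE: "f \<in> E" by blast
      have fX: "f \<in> X" using R2[OF fH] by (simp add: H_def)
      have "d y f \<le> d y z + d z f" using d_tri[OF yX zX fX] .
      moreover have "d z f < lam * d x y - d y z" using R2[OF fH] by (simp add: \<rho>_def)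
      ultimately have "d y f < lam * d x y" by linarith
      then have "f \<in> {z \<in> X. d y z < lam * d x y} \<inter> E" using fX fE by simp
      then show False using hole by blast
    qed
    have "r2 \<le> r/2" using r2 by (simp add: \<rho>_def)
    then show ?thesis using g2 R2 disj by blast
  qed
qed

end

context LP
begin

lemma complete_seq:
  assumes cX: "\<And>n. c n \<in> X" and cd: "\<And>n m. n \<le> m \<Longrightarrow> d (c n) (c m) \<le> r n"
    and r: "r \<longlonglongrightarrow> 0"
  shows "\<exists>x\<in>X. (\<forall>n. d (c n) x \<le> r n) \<and> (\<forall>k. (\<lambda>m. c m k) \<longlonglongrightarrow> x k)"
proof -
  have rn0: "0 \<le> r n" for n using cd[of n n] d_nonneg[of "c n" "c n"] by simp
  have pt: "\<bar>c n k - c m k\<bar> \<le> r n" if "n \<le> m" for n m k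
    using d_point[OF cX[of n] cX[of m], of k] cd[OF that] by simp
  have cauchy: "Cauchy (\<lambda>m. c m k)" for k
  proof (rule metric_CauchyI)
    fix e :: real assume e: "0 < e"
    from r e obtain M where M: "\<And>n. n \<ge> M \<Longrightarrow> \<bar>r n\<bar> < e"
      unfolding LIMSEQ_def dist_real_def by auto
    show "\<exists>M. \<forall>m\<ge>M. \<forall>n\<ge>M. dist (c m k) (c n k) < e"
    proof (intro exI allI impI)
      fix m n assume mn: "M \<le> m" "M \<le> n"
      show "dist (c m k) (c n k) < e"
      proof (cases "m \<le> n")
        case True
        then show ?thesis using pt[OF True, of k] M[OF mn(1)] by (simp add: dist_real_def)
      next
        case False
        then have nm: "n \<le> m" by simp
        show ?thesis using pt[OF nm, of k] M[OF mn(2)] by (simp add: dist_real_def abs_minus_commute)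
      qed
    qed
  qed
  define x where "x k = lim (\<lambda>m. c m k)" for k
  have xlim: "(\<lambda>m. c m k) \<longlonglongrightarrow> x k" for k
    unfolding x_def using cauchy[of k] by (simp add: Cauchy_convergent_iff convergent_LIMSEQ_iff)
  have xout: "x k = 0" if "k \<notin> A" for k
  proof -
    have "(\<lambda>m. c m k) = (\<lambda>m. 0)" using X_out[OF cX that] by simp
    then have "(\<lambda>m. 0::real) \<longlonglongrightarrow> x k" using xlim[of k] by simp
    then show ?thesis using LIMSEQ_unique[OF _ tendsto_const] by metis
  qed
  have bound: "\<forall>n. (\<lambda>k. c n k - x k) \<in> X \<and> d (c n) x \<le> r n"
  proof
    fix n
    define w where "w k = \<bar>c n k - x k\<bar> powr p" for k
    have w0: "0 \<le> w k" for k by (simp add: w_def)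
    have fin: "sum w F \<le> r n powr p" if F: "finite F" "F \<subseteq> A" for F
    proof -
      have lim: "(\<lambda>m. sum (\<lambda>k. \<bar>c n k - c m k\<bar> powr p) F) \<longlonglongrightarrow> sum w F"
        unfolding w_def
        by (intro tendsto_sum tendsto_powr' tendsto_rabs tendsto_diff tendsto_const xlim) (use p0 in auto)
      have ev: "\<forall>m\<ge>n. sum (\<lambda>k. \<bar>c n k - c m k\<bar> powr p) F \<le> r n powr p"
      proof (intro allI impI)
        fix m assume nm: "n \<le> m"
        have "sum (\<lambda>k. \<bar>c n k - c m k\<bar> powr p) F \<le> N (\<lambda>k. c n k - c m k)"
          unfolding N_def using F X_summ[OF X_diff[OF cX cX]] by (intro finite_sum_le_infsum) auto
        also have "\<dots> = d (c n) (c m) powr p" by (simp add: d_eq N_root_pow)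
        also have "\<dots> \<le> r n powr p" using cd[OF nm] d_nonneg p0 by (intro powr_mono2) auto
        finally show "sum (\<lambda>k. \<bar>c n k - c m k\<bar> powr p) F \<le> r n powr p" .
      qed
      show ?thesis using LIMSEQ_le_const2[OF lim] ev by blast
    qed
    have ws: "w summable_on A"
    proof (rule nonneg_bdd_above_summable_on)
      show "bdd_above (sum w ` {F. F \<subseteq> A \<and> finite F})"
        using fin by (intro bdd_aboveI[of _ "r n powr p"]) auto
    qed (simp add: w0)
    have cxX: "(\<lambda>k. c n k - x k) \<in> X"
      unfolding X_iff using ws xout X_out[OF cX] by (simp add: w_def[abs_def])
    have Nle: "N (\<lambda>k. c n k - x k) \<le> r n powr p"
      unfolding N_def using infsum_le_finite_sums[OF ws fin] by (simp add: w_def[abs_def])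
    have "d (c n) x = N (\<lambda>k. c n k - x k) powr (1/p)" by (simp add: d_eq)
    also have "\<dots> \<le> (r n powr p) powr (1/p)" using Nle N_nonneg p0 by (intro powr_mono2) auto
    also have "\<dots> = r n" using rn0[of n] p0 by (simp add: powr_powr)
    finally show "(\<lambda>k. c n k - x k) \<in> X \<and> d (c n) x \<le> r n" using cxX by simp
  qed
  have b0: "(\<lambda>k. c 0 k - x k) \<in> X" using bound by blast
  have "(\<lambda>k. c 0 k - (c 0 k - x k)) \<in> X" using X_diff[OF cX[of 0] b0] .
  then have "x \<in> X" by simp
  then show ?thesis using bound xlim by blast
qed

end

theorem corollary2p6:
  fixes p :: real and A :: "'a set" and g :: "'a \<Rightarrow> real"
  assumes "p \<ge> 1" and "A \<noteq> {}" and "g \<in> lp p A"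
  shows "\<forall>lam. 0 < lam \<and> lam < 1 \<longrightarrow>
           \<not> sigma_porous (lp p A) (lp_dist p A) lam {f \<in> lp p A. \<forall>x\<in>A. \<bar>f x\<bar> \<ge> \<bar>g x\<bar>}"
proof (intro allI impI notI)
  fix lam :: real
  assume lam: "0 < lam \<and> lam < 1"
    and sp: "sigma_porous (lp p A) (lp_dist p A) lam {f \<in> lp p A. \<forall>x\<in>A. \<bar>f x\<bar> \<ge> \<bar>g x\<bar>}"
  have lp1: "1 \<le> p" using assms(1) by simp
  have lm0: "0 < lam" and lm1: "lam < 1" using lam by simp_all
  interpret LPL p A lam
    by (rule LPL.intro, rule LP.intro, rule lp1, rule LPL_axioms.intro, rule lm0, rule lm1)
  have "\<exists>E. (\<forall>n::nat. porous X d lam (E n)) \<and> {f \<in> lp p A. \<forall>x\<in>A. \<bar>f x\<bar> \<ge> \<bar>g x\<bar>} = (\<Union>n. E n)"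
    using sp unfolding sigma_porous_def by assumption
  then obtain E where EE: "(\<forall>n::nat. porous X d lam (E n)) \<and> {f \<in> lp p A. \<forall>x\<in>A. \<bar>f x\<bar> \<ge> \<bar>g x\<bar>} = (\<Union>n. E n)"
    by (rule exE)
  have Ep: "porous X d lam (E n)" for n using EE by simp
  have eq: "{f \<in> lp p A. \<forall>x\<in>A. \<bar>f x\<bar> \<ge> \<bar>g x\<bar>} = (\<Union>n. E n)" using EE by (rule conjunct2)
  define G where "G s = good (fst s) (fst (snd s)) (snd (snd s))" for s :: "('a \<Rightarrow> real) \<times> real \<times> ('a \<Rightarrow> real)"
  define HH where "HH s = H (fst s) (fst (snd s)) (snd (snd s))" for s :: "('a \<Rightarrow> real) \<times> real \<times> ('a \<Rightarrow> real)"
  define P where "P n s s' \<longleftrightarrow> G s' \<and> fst (snd s') \<le> fst (snd s) / 2 \<and> HH s' \<subseteq> HH s \<and> HH s' \<inter> E n = {}"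
    for n s s'
  have ex: "\<exists>s'. G s \<longrightarrow> P n s s'" for n s
  proof (cases "G s")
    case True
    then obtain c' r' \<phi>' where "good c' r' \<phi>' \<and> r' \<le> fst (snd s)/2 \<and> H c' r' \<phi>' \<subseteq> HH s \<and> H c' r' \<phi>' \<inter> E n = {}"
      using step[of "fst s" "fst (snd s)" "snd (snd s)" "E n"] Ep[of n] unfolding G_def HH_def by blast
    then show ?thesis by (intro exI[of _ "(c', r', \<phi>')"]) (simp add: P_def G_def HH_def)
  qed simp
  define nxt where "nxt n s = (SOME s'. G s \<longrightarrow> P n s s')" for n s
  have nxt: "P n s (nxt n s)" if "G s" for n s
    using someI_ex[OF ex[of s n]] that unfolding nxt_def by blast
  define s0 where "s0 = (g, 1::real, \<lambda>k. if k \<in> A then \<bar>g k\<bar> else 0)"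
  define S where "S = rec_nat s0 nxt"
  have S0: "S 0 = s0" and SS: "S (Suc n) = nxt n (S n)" for n by (simp_all add: S_def)
  have G0: "G s0"
  proof -
    have s1: "((\<lambda>k. (if k \<in> A then \<bar>g k\<bar> else 0) powr p) summable_on A) = ((\<lambda>k. \<bar>g k\<bar> powr p) summable_on A)"
      by (rule summable_on_cong) simp
    show ?thesis using s1 X_summ[OF assms(3)] assms(3) unfolding G_def s0_def good_def by auto
  qed
  have GS: "G (S n)" for n
  proof (induction n)
    case 0 then show ?case using G0 S0 by simp
  next
    case (Suc n) then show ?case using nxt[of "S n" n] SS[of n] by (simp add: P_def)
  qed
  have PS: "P n (S n) (S (Suc n))" for n using nxt[OF GS[of n]] SS[of n] by simp
  define c where "c n = fst (S n)" for n
  define r where "r n = fst (snd (S n))" for n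
  define \<phi> where "\<phi> n = snd (snd (S n))" for n
  have goodn: "good (c n) (r n) (\<phi> n)" for n using GS[of n] by (simp add: G_def c_def r_def \<phi>_def)
  have HHn: "HH (S n) = H (c n) (r n) (\<phi> n)" for n by (simp add: HH_def c_def r_def \<phi>_def)
  have rle: "r n \<le> (1/2)^n" for n
  proof (induction n)
    case 0 then show ?case by (simp add: r_def S0 s0_def)
  next
    case (Suc n)
    have "r (Suc n) \<le> r n / 2" using PS[of n] by (simp add: P_def r_def)
    then show ?case using Suc by simp
  qed
  have r0: "0 \<le> r n" for n using goodn[of n] by (simp add: good_def)
  have Hdec: "H (c (Suc n)) (r (Suc n)) (\<phi> (Suc n)) \<subseteq> H (c n) (r n) (\<phi> n)" for n
    using PS[of n] by (simp add: P_def HHn)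
  have Hanti: "H (c m) (r m) (\<phi> m) \<subseteq> H (c n) (r n) (\<phi> n)" if "n \<le> m" for n m
    using lift_Suc_antimono_le[of "\<lambda>n. H (c n) (r n) (\<phi> n)", OF Hdec that] .
  have cmH: "c m \<in> H (c n) (r n) (\<phi> n)" if "n \<le> m" for n m
    using H_center[OF goodn[of m]] Hanti[OF that] by blast
  have cX: "c n \<in> X" for n using goodn[of n] by (simp add: good_def)
  have cd: "d (c n) (c m) \<le> r n" if "n \<le> m" for n m using cmH[OF that] by (simp add: H_def)
  have rlim: "r \<longlonglongrightarrow> 0"
  proof (rule tendsto_sandwich[of "\<lambda>_. 0" _ _ "\<lambda>n. (1/2)^n"])
    show "\<forall>\<^sub>F n in sequentially. 0 \<le> r n" using r0 by simp
    show "\<forall>\<^sub>F n in sequentially. r n \<le> (1/2)^n" using rle by simp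
    show "(\<lambda>n. (1/2::real)^n) \<longlonglongrightarrow> 0" by (rule LIMSEQ_power_zero) simp
  qed simp
  obtain x where xX: "x \<in> X" and dx: "\<And>n. d (c n) x \<le> r n" and xl: "\<And>k. (\<lambda>m. c m k) \<longlonglongrightarrow> x k"
    using complete_seq[OF cX cd rlim] by blast
  have xH: "x \<in> H (c n) (r n) (\<phi> n)" for n
    unfolding H_def
  proof (intro CollectI conjI ballI)
    show "x \<in> X" by fact
    show "d (c n) x \<le> r n" by fact
    fix k assume kA: "k \<in> A"
    have lim: "(\<lambda>m. \<bar>c m k\<bar>) \<longlonglongrightarrow> \<bar>x k\<bar>" using xl[of k] by (rule tendsto_rabs)
    have "\<forall>m\<ge>n. \<phi> n k \<le> \<bar>c m k\<bar>" using cmH kA by (auto simp: H_def)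
    then show "\<phi> n k \<le> \<bar>x k\<bar>" using LIMSEQ_le_const[OF lim] by blast
  qed
  have "x \<in> {f \<in> lp p A. \<forall>x\<in>A. \<bar>f x\<bar> \<ge> \<bar>g x\<bar>}"
    using xH[of 0] by (simp add: H_def c_def r_def \<phi>_def S0 s0_def)
  then obtain n where "x \<in> E n" using eq by blast
  moreover have "x \<in> HH (S (Suc n))" using xH[of "Suc n"] HHn by simp
  ultimately show False using PS[of n] by (auto simp: P_def)
qed

end
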